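(* Let $n\ge 4$, $N=\{1,\dots,n\}$, fix distinct $i_1,i_2\in N$ and let $\hat N^c=N\setminus\{i_1,i_2\}$. Then the inequality $$\sum_{j\in\hat N^c}\left(x_{i_1j}+x_{ji_1}+x_{i_2j}\right)-x_{i_2i_1}-\sum_{j,j'\in\hat N^c:\,j\ne j'} x_{jj'}\le 3-\frac{(n-4)(n-5)}{2}$$ defines a facet of the weak order polytope $P^n_{WO}$.
   Context: Let $N=\{1,\dots,n\}$ and $A_N=\{(i,j): i,j\in N, i\ne j\}$. A weak order on $N$ is a binary relation $W\subseteq N\times N$ that is reflexive, transitive and total; $(i,j)\in W$ is read "$i$ is preferred over or tied with $j$". The characteristic vector of $W$ is $x^W\in\{0,1\}^{A_N}$ with $x^W_{(i,j)}=1$ if $(i,j)\in W$ and $0$ otherwise. The weak order polytope $P^n_{WO}$ is the convex hull of the characteristic vectors of all weak orders on $N$; its points are vectors $x\in\mathbb{R}^{A_N}$ and $x_{ij}$ denotes the coordinate $x_{(i,j)}$. $P^n_{WO}$ has dimension $n(n-1)$. An inequality $\pi x\le\pi_0$ defines a facet of a polytope $P$ if it is valid for $P$ (holds for all $x\in P$) and the face $P\cap\{x:\pi x=\pi_0\}$ is nonempty, proper, and contains $\dim(P)$ affinely independent points. *)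

theory Defs
  imports "HOL-Analysis.Analysis"
begin

text \<open>The ground set N is modelled by a finite type 'n (so n = CARD('n)).
  Points of the ambient space are vectors indexed by pairs (i,j); the
  diagonal coordinates (i,i), which are not in A_N, are identically 0
  for all characteristic vectors (so they play no role).\<close>

definition weak_order :: "('n \<times> 'n) set \<Rightarrow> bool" where
  "weak_order W \<longleftrightarrow> refl W \<and> trans W \<and> total W"

definition char_vec :: "('n::finite \<times> 'n) set \<Rightarrow> real ^ ('n \<times> 'n)" where
  "char_vec W = (\<chi> p. if fst p \<noteq> snd p \<and> p \<in> W then 1 else 0)"

definition weak_order_polytope :: "(real ^ ('n::finite \<times> 'n)) set" where
  "weak_order_polytope = convex hull {char_vec W | W. weak_order W}"

definition defines_facet ::
  "('a::euclidean_space \<Rightarrow> real) \<Rightarrow> real \<Rightarrow> 'a set \<Rightarrow> bool" where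
  "defines_facet f c P \<longleftrightarrow>
     (\<forall>x\<in>P. f x \<le> c) \<and>
     (let F = P \<inter> {x. f x = c} in
        F \<noteq> {} \<and> F \<noteq> P \<and>
        (\<exists>S. S \<subseteq> F \<and> finite S \<and> int (card S) = aff_dim P \<and> \<not> affine_dependent S))"

end

theory Submission
  imports Defs
begin

definition RR :: "'n \<Rightarrow> 'n \<Rightarrow> 'n set" where
  "RR i1 i2 = UNIV - {i1, i2}"

definition PP :: "'n \<Rightarrow> 'n \<Rightarrow> ('n \<times> 'n) set" where
  "PP i1 i2 = {(j, j'). j \<in> UNIV - {i1, i2} \<and> j' \<in> UNIV - {i1, i2} \<and> j \<noteq> j'}"

definition FF :: "'n::finite \<Rightarrow> 'n \<Rightarrow> real ^ ('n \<times> 'n) \<Rightarrow> real" where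
  "FF i1 i2 x = (\<Sum>j\<in>UNIV - {i1, i2}. x $ (i1, j) + x $ (j, i1) + x $ (i2, j))
        - x $ (i2, i1)
        - (\<Sum>p\<in>{(j, j'). j \<in> UNIV - {i1, i2} \<and> j' \<in> UNIV - {i1, i2} \<and> j \<noteq> j'}. x $ p)"

definition cc :: "nat \<Rightarrow> real" where
  "cc n = 3 - (real n - 4) * (real n - 5) / 2"

lemma card_offdiag:
  assumes "finite A"
  shows "card {(j, j'). j \<in> A \<and> j' \<in> A \<and> j \<noteq> j'} = card A * card A - card A"
proof -
  have e: "{(j, j'). j \<in> A \<and> j' \<in> A \<and> j \<noteq> j'} = A \<times> A - (\<lambda>a. (a, a)) ` A" by auto
  have "card ((\<lambda>a. (a, a)) ` A) = card A" by (rule card_image) (auto intro: inj_onI)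
  moreover have "(\<lambda>a. (a, a)) ` A \<subseteq> A \<times> A" by auto
  ultimately show ?thesis unfolding e using assms
    by (simp add: card_Diff_subset card_cartesian_product)
qed

lemma card_RR:
  fixes i1 i2 :: "'n::finite"
  assumes "i1 \<noteq> i2"
  shows "real (card (UNIV - {i1, i2} :: 'n set)) = real CARD('n) - 2"
proof -
  have "card (UNIV - {i1, i2} :: 'n set) = CARD('n) - 2"
    using assms by (simp add: card_Diff_subset)
  moreover have "CARD('n) \<ge> 2"
  proof -
    have "card {i1, i2} \<le> CARD('n)" by (rule card_mono) auto
    then show ?thesis using assms by simp
  qed
  ultimately show ?thesis by simp
qed

lemma sum_swap_pairs:
  fixes g :: "'n \<times> 'n \<Rightarrow> real"
  shows "(\<Sum>p\<in>{(j, j'). j \<in> A \<and> j' \<in> A \<and> j \<noteq> j'}. g p)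
       = (\<Sum>p\<in>{(j, j'). j \<in> A \<and> j' \<in> A \<and> j \<noteq> j'}. g (snd p, fst p))"
proof -
  let ?P = "{(j, j'). j \<in> A \<and> j' \<in> A \<and> j \<noteq> j'}"
  have "bij_betw prod.swap ?P ?P"
    by (rule bij_betwI[where g = prod.swap]) auto
  then show ?thesis
    by (subst sum.reindex_bij_betw[symmetric, where h = prod.swap]) (auto simp: prod.swap_def case_prod_beta)
qed

lemma ident:
  fixes i1 i2 :: "'n::finite" and x :: "real ^ ('n \<times> 'n)"
  assumes ne: "i1 \<noteq> i2"
    and b01: "\<And>j j'. j \<in> UNIV - {i1, i2} \<Longrightarrow> j' \<in> UNIV - {i1, i2} \<Longrightarrow> j \<noteq> j' \<Longrightarrow> x $ (j, j') = 0 \<or> x $ (j, j') = 1"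
    and tot: "\<And>j j'. j \<in> UNIV - {i1, i2} \<Longrightarrow> j' \<in> UNIV - {i1, i2} \<Longrightarrow> j \<noteq> j' \<Longrightarrow> x $ (j, j') + x $ (j', j) \<ge> 1"
  shows "FF i1 i2 x = cc CARD('n)
      + (\<Sum>j\<in>UNIV - {i1, i2}. x $ (i1, j) + x $ (j, i1) + x $ (i2, j) - 2) - x $ (i2, i1)
      - (\<Sum>p\<in>{(j, j'). j \<in> UNIV - {i1, i2} \<and> j' \<in> UNIV - {i1, i2} \<and> j \<noteq> j'}. x $ p * x $ (snd p, fst p)) / 2"
proof -
  let ?R = "UNIV - {i1, i2} :: 'n set"
  let ?P = "{(j, j'). j \<in> ?R \<and> j' \<in> ?R \<and> j \<noteq> j'}"
  have fin: "finite ?P" by simp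
  have pt: "\<And>p. p \<in> ?P \<Longrightarrow> x $ p + x $ (snd p, fst p) = 1 + x $ p * x $ (snd p, fst p)"
  proof -
    fix p assume p: "p \<in> ?P"
    obtain j j' where pj: "p = (j, j')" by (cases p)
    have a: "j \<in> ?R" "j' \<in> ?R" "j \<noteq> j'" using p pj by auto
    from b01[OF a] b01[OF a(2,1) a(3)[symmetric]] tot[OF a]
    show "x $ p + x $ (snd p, fst p) = 1 + x $ p * x $ (snd p, fst p)"
      unfolding pj by auto
  qed
  have "2 * (\<Sum>p\<in>?P. x $ p) = (\<Sum>p\<in>?P. x $ p) + (\<Sum>p\<in>?P. x $ (snd p, fst p))"
    using sum_swap_pairs[of "\<lambda>p. x $ p" ?R] by simp
  also have "\<dots> = (\<Sum>p\<in>?P. x $ p + x $ (snd p, fst p))" by (simp add: sum.distrib)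
  also have "\<dots> = (\<Sum>p\<in>?P. 1 + x $ p * x $ (snd p, fst p))" using pt by (rule sum.cong[OF refl])
  also have "\<dots> = real (card ?P) + (\<Sum>p\<in>?P. x $ p * x $ (snd p, fst p))" by (simp add: sum.distrib)
  finally have s2: "2 * (\<Sum>p\<in>?P. x $ p) = real (card ?P) + (\<Sum>p\<in>?P. x $ p * x $ (snd p, fst p))" .
  have cP: "card ?P = card ?R * card ?R - card ?R" by (rule card_offdiag) simp
  have cR: "real (card ?R) = real CARD('n) - 2" using card_RR[OF ne] .
  have cP2: "real (card ?P) = real (card ?R) * real (card ?R) - real (card ?R)"
    unfolding cP by (simp add: of_nat_diff)
  have s1: "(\<Sum>j\<in>?R. x $ (i1, j) + x $ (j, i1) + x $ (i2, j) - 2)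
      = (\<Sum>j\<in>?R. x $ (i1, j) + x $ (j, i1) + x $ (i2, j)) - 2 * real (card ?R)"
    by (simp add: sum_subtractf)
  have hP: "real (card ?P) = real CARD('n) * real CARD('n) - 5 * real CARD('n) + 6"
    unfolding cP2 cR by (simp add: algebra_simps)
  have h45: "(real CARD('n) - 4) * (real CARD('n) - 5) = real CARD('n) * real CARD('n) - 9 * real CARD('n) + 20"
    by (simp add: algebra_simps)
  have s3: "(\<Sum>p\<in>?P. x $ p) = (real CARD('n) * real CARD('n) - 5 * real CARD('n) + 6) / 2
      + (\<Sum>p\<in>?P. x $ p * x $ (snd p, fst p)) / 2"
    using s2 hP by (simp add: field_simps)
  show ?thesis unfolding FF_def cc_def s1 h45 s3 cR by (simp add: field_simps)
qed


lemma char_vec_nth: "char_vec W $ (a, b) = (if a \<noteq> b \<and> (a, b) \<in> W then 1 else 0)"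
  by (simp add: char_vec_def)

lemma nat_quad: "real (k::nat) \<ge> 1 \<Longrightarrow> real k \<le> 1 + (real k * real k - real k) / 2"
proof -
  assume "real k \<ge> 1"
  then have "k = 1 \<or> k \<ge> 2" by auto
  then show ?thesis
  proof
    assume "k \<ge> 2" then have "real k \<ge> 2" by simp
    then have "(real k - 1) * (real k - 2) \<ge> 0" by simp
    then have "real k * 3 \<le> 2 + real k * real k" by (simp add: algebra_simps)
    then show ?thesis by (simp add: field_simps)
  qed simp
qed

lemma lin_help: "(k::real) \<le> 1 + q / 2 \<Longrightarrow> q \<le> T \<Longrightarrow> a \<le> k \<Longrightarrow> a - 1 - T / 2 \<le> 0"
  by linarith

lemma ident_wo:
  fixes i1 i2 :: "'n::finite"
  assumes ne: "i1 \<noteq> i2" and wo: "weak_order W"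
  shows "FF i1 i2 (char_vec W) = cc CARD('n)
      + (\<Sum>j\<in>UNIV - {i1, i2}. char_vec W $ (i1, j) + char_vec W $ (j, i1) + char_vec W $ (i2, j) - 2) - char_vec W $ (i2, i1)
      - (\<Sum>p\<in>{(j, j'). j \<in> UNIV - {i1, i2} \<and> j' \<in> UNIV - {i1, i2} \<and> j \<noteq> j'}. char_vec W $ p * char_vec W $ (snd p, fst p)) / 2"
proof (rule ident[OF ne])
  fix j j' :: 'n assume "j \<noteq> j'"
  then show "char_vec W $ (j, j') = 0 \<or> char_vec W $ (j, j') = 1" by (simp add: char_vec_nth)
  from wo \<open>j \<noteq> j'\<close> show "char_vec W $ (j, j') + char_vec W $ (j', j) \<ge> 1"
    unfolding weak_order_def total_on_def by (auto simp: char_vec_nth)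
qed

lemma valid_wo:
  fixes i1 i2 :: "'n::finite"
  assumes ne: "i1 \<noteq> i2" and wo: "weak_order W"
  shows "FF i1 i2 (char_vec W) \<le> cc CARD('n)"
proof -
  let ?x = "char_vec W"
  let ?R = "UNIV - {i1, i2} :: 'n set"
  let ?P = "{(j, j'). j \<in> ?R \<and> j' \<in> ?R \<and> j \<noteq> j'}"
  let ?T = "(\<Sum>p\<in>?P. ?x $ p * ?x $ (snd p, fst p))"
  define G where "G = {j \<in> ?R. (i1, j) \<in> W \<and> (j, i1) \<in> W \<and> (i2, j) \<in> W}"
  have tr: "trans W" using wo by (simp add: weak_order_def)
  have GR: "G \<subseteq> ?R" by (auto simp: G_def)
  have gle: "\<And>j. j \<in> ?R \<Longrightarrow> ?x $ (i1, j) + ?x $ (j, i1) + ?x $ (i2, j) - 2 \<le> (if j \<in> G then 1 else 0)"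
    by (auto simp: char_vec_nth G_def)
  have "(\<Sum>j\<in>?R. ?x $ (i1, j) + ?x $ (j, i1) + ?x $ (i2, j) - 2) \<le> (\<Sum>j\<in>?R. (if j \<in> G then 1 else 0))"
    by (rule sum_mono) (rule gle)
  also have "\<dots> = real (card G)"
    using GR by (simp add: sum.If_cases Int_absorb1 inf.absorb2)
  finally have sg: "(\<Sum>j\<in>?R. ?x $ (i1, j) + ?x $ (j, i1) + ?x $ (i2, j) - 2) \<le> real (card G)" .
  have Tnn: "?T \<ge> 0" by (rule sum_nonneg) (simp add: char_vec_def)
  have x21: "?x $ (i2, i1) \<ge> 0" by (simp add: char_vec_nth)
  show ?thesis
  proof (cases "G = {}")
    case True
    then show ?thesis unfolding ident_wo[OF ne wo] using sg Tnn x21 by simp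
  next
    case False
    then obtain g0 where g0: "g0 \<in> G" by auto
    have "(i2, i1) \<in> W" using g0 tr unfolding G_def trans_def by blast
    then have x1: "?x $ (i2, i1) = 1" using ne by (simp add: char_vec_nth)
    let ?O = "{(j, j'). j \<in> G \<and> j' \<in> G \<and> j \<noteq> j'}"
    have OP: "?O \<subseteq> ?P" using GR by auto
    have "real (card ?O) = (\<Sum>p\<in>?O. ?x $ p * ?x $ (snd p, fst p))"
    proof -
      have "\<And>p. p \<in> ?O \<Longrightarrow> ?x $ p * ?x $ (snd p, fst p) = 1"
      proof -
        fix p assume p: "p \<in> ?O"
        obtain a b where pab: "p = (a, b)" by (cases p)
        have ab: "a \<in> G" "b \<in> G" "a \<noteq> b" using p pab by auto
        have "(a, b) \<in> W" "(b, a) \<in> W" using ab tr unfolding G_def trans_def by blast+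
        then show "?x $ p * ?x $ (snd p, fst p) = 1" using ab pab by (simp add: char_vec_nth)
      qed
      then show ?thesis by simp
    qed
    also have "\<dots> \<le> ?T"
      by (rule sum_mono2) (use OP in \<open>auto simp: char_vec_def\<close>)
    finally have TO: "real (card ?O) \<le> ?T" .
    have cO: "card ?O = card G * card G - card G" by (rule card_offdiag) simp
    have cO2: "real (card ?O) = real (card G) * real (card G) - real (card G)"
      unfolding cO by (simp add: of_nat_diff)
    have "card G > 0" using g0 by (auto simp: card_gt_0_iff)
    then have "real (card G) \<ge> 1" by simp
    then have "real (card G) \<le> 1 + (real (card G) * real (card G) - real (card G)) / 2" by (rule nat_quad)
    moreover have "real (card G) * real (card G) - real (card G) \<le> ?T" using TO cO2 by simp
    ultimately have "(\<Sum>j\<in>?R. ?x $ (i1, j) + ?x $ (j, i1) + ?x $ (i2, j) - 2) - 1 - ?T / 2 \<le> 0"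
      using sg by (rule lin_help)
    then show ?thesis unfolding ident_wo[OF ne wo] x1 by simp
  qed
qed

definition rel :: "('n \<Rightarrow> int) \<Rightarrow> ('n \<times> 'n) set" where
  "rel r = {(a, b). r a \<le> r b}"

lemma wo_rel: "weak_order (rel r)"
  unfolding weak_order_def rel_def refl_on_def trans_def total_on_def by auto

lemma char_rel: "char_vec (rel r) $ (a, b) = (if a \<noteq> b \<and> r a \<le> r b then 1 else 0)"
  by (simp add: char_vec_def rel_def)

lemma vec_pairI: "(\<And>a b. (x::real ^ ('n::finite \<times> 'n)) $ (a, b) = y $ (a, b)) \<Longrightarrow> x = y"
  by (simp add: vec_eq_iff)

definition gr :: "'n \<Rightarrow> 'n \<Rightarrow> ('n \<Rightarrow> int) \<Rightarrow> 'n \<Rightarrow> real" where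
  "gr i1 i2 r j = (if r i1 \<le> r j then 1 else 0) + (if r j \<le> r i1 then 1 else 0) + (if r i2 \<le> r j then 1 else 0) - 2"

definition x21 :: "'n \<Rightarrow> 'n \<Rightarrow> ('n \<Rightarrow> int) \<Rightarrow> real" where
  "x21 i1 i2 r = (if r i2 \<le> r i1 then 1 else 0)"

lemma FF_rel:
  fixes i1 i2 :: "'n::finite"
  assumes ne: "i1 \<noteq> i2"
  shows "FF i1 i2 (char_vec (rel r)) = cc CARD('n) + (\<Sum>j\<in>UNIV - {i1, i2}. gr i1 i2 r j) - x21 i1 i2 r
     - (\<Sum>p\<in>{(j, j'). j \<in> UNIV - {i1, i2} \<and> j' \<in> UNIV - {i1, i2} \<and> j \<noteq> j'}. (if r (fst p) = r (snd p) then 1 else 0)) / 2"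
proof -
  have a: "(\<Sum>j\<in>UNIV - {i1, i2}. char_vec (rel r) $ (i1, j) + char_vec (rel r) $ (j, i1) + char_vec (rel r) $ (i2, j) - 2)
     = (\<Sum>j\<in>UNIV - {i1, i2}. gr i1 i2 r j)"
    by (rule sum.cong) (auto simp: char_rel gr_def)
  have b: "(\<Sum>p\<in>{(j, j'). j \<in> UNIV - {i1, i2} \<and> j' \<in> UNIV - {i1, i2} \<and> j \<noteq> j'}. char_vec (rel r) $ p * char_vec (rel r) $ (snd p, fst p))
     = (\<Sum>p\<in>{(j, j'). j \<in> UNIV - {i1, i2} \<and> j' \<in> UNIV - {i1, i2} \<and> j \<noteq> j'}. (if r (fst p) = r (snd p) then 1 else 0))"
    by (rule sum.cong) (auto simp: char_vec_def rel_def)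
  have c: "char_vec (rel r) $ (i2, i1) = x21 i1 i2 r" using ne by (simp add: char_rel x21_def)
  show ?thesis unfolding ident_wo[OF ne wo_rel] a b c ..
qed

lemma FF_inj:
  fixes i1 i2 :: "'n::finite"
  assumes ne: "i1 \<noteq> i2" and inj: "inj_on r (UNIV - {i1, i2})" and j: "j \<in> UNIV - {i1, i2}"
    and z: "\<And>k. k \<in> UNIV - {i1, i2} \<Longrightarrow> k \<noteq> j \<Longrightarrow> gr i1 i2 r k = 0"
  shows "FF i1 i2 (char_vec (rel r)) = cc CARD('n) + gr i1 i2 r j - x21 i1 i2 r"
proof -
  have t: "(\<Sum>p\<in>{(j, j'). j \<in> UNIV - {i1, i2} \<and> j' \<in> UNIV - {i1, i2} \<and> j \<noteq> j'}. (if r (fst p) = r (snd p) then 1 else 0)) = (0::real)"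
  proof (rule sum.neutral, rule ballI)
    fix p assume p: "p \<in> {(j, j'). j \<in> UNIV - {i1, i2} \<and> j' \<in> UNIV - {i1, i2} \<and> j \<noteq> j'}"
    then have "fst p \<in> UNIV - {i1, i2}" "snd p \<in> UNIV - {i1, i2}" "fst p \<noteq> snd p" by auto
    then have "r (fst p) \<noteq> r (snd p)" using inj_onD[OF inj] by metis
    then show "(if r (fst p) = r (snd p) then 1 else 0) = (0::real)" by simp
  qed
  have s: "(\<Sum>j\<in>UNIV - {i1, i2}. gr i1 i2 r j) = gr i1 i2 r j"
    by (subst sum.remove[OF _ j]) (auto intro!: sum.neutral z)
  show ?thesis unfolding FF_rel[OF ne] t s by simp
qed

lemma FF_pair:
  fixes i1 i2 :: "'n::finite"
  assumes ne: "i1 \<noteq> i2" and j: "j \<in> UNIV - {i1, i2}" and j': "j' \<in> UNIV - {i1, i2}" and jj: "j \<noteq> j'"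
    and eq: "r j = r j'"
    and inj: "\<And>k k'. k \<in> UNIV - {i1, i2} \<Longrightarrow> k' \<in> UNIV - {i1, i2} \<Longrightarrow> k \<noteq> k' \<Longrightarrow> r k = r k' \<Longrightarrow> (k, k') = (j, j') \<or> (k, k') = (j', j)"
    and z: "\<And>k. k \<in> UNIV - {i1, i2} \<Longrightarrow> k \<noteq> j \<Longrightarrow> k \<noteq> j' \<Longrightarrow> gr i1 i2 r k = 0"
  shows "FF i1 i2 (char_vec (rel r)) = cc CARD('n) + gr i1 i2 r j + gr i1 i2 r j' - x21 i1 i2 r - 1"
proof -
  let ?P = "{(j, j'). j \<in> UNIV - {i1, i2} \<and> j' \<in> UNIV - {i1, i2} \<and> j \<noteq> j'}"
  have "(\<Sum>p\<in>?P. (if r (fst p) = r (snd p) then 1 else 0)) = (\<Sum>p\<in>{(j, j'), (j', j)}. (1::real))"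
  proof (rule sum.mono_neutral_cong_right)
    show "{(j, j'), (j', j)} \<subseteq> ?P" using j j' jj by auto
    show "\<forall>i\<in>?P - {(j, j'), (j', j)}. (if r (fst i) = r (snd i) then 1 else 0) = (0::real)"
    proof
      fix p assume p: "p \<in> ?P - {(j, j'), (j', j)}"
      obtain a b where pab: "p = (a, b)" by (cases p)
      have "a \<in> UNIV - {i1, i2}" "b \<in> UNIV - {i1, i2}" "a \<noteq> b" "(a, b) \<noteq> (j, j')" "(a, b) \<noteq> (j', j)"
        using p pab by auto
      then have "r a \<noteq> r b" using inj by blast
      then show "(if r (fst p) = r (snd p) then 1 else 0) = (0::real)" using pab by simp
    qed
    show "\<And>x. x \<in> {(j, j'), (j', j)} \<Longrightarrow> (if r (fst x) = r (snd x) then 1 else 0) = (1::real)"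
      using eq by auto
  qed simp
  also have "\<dots> = 2" using jj by simp
  finally have t: "(\<Sum>p\<in>?P. (if r (fst p) = r (snd p) then 1 else 0)) = (2::real)" .
  have s: "(\<Sum>j\<in>UNIV - {i1, i2}. gr i1 i2 r j) = gr i1 i2 r j + gr i1 i2 r j'"
  proof -
    have "(\<Sum>k\<in>UNIV - {i1, i2}. gr i1 i2 r k) = (\<Sum>k\<in>{j, j'}. gr i1 i2 r k)"
      proof (rule sum.mono_neutral_cong_right)
        show "\<forall>i\<in>UNIV - {i1, i2} - {j, j'}. gr i1 i2 r i = 0" using z by blast
      qed (use j j' in auto)
    then show ?thesis using jj by simp
  qed
  show ?thesis unfolding FF_rel[OF ne] t s by simp
qed

definition Tset :: "'n::finite \<Rightarrow> 'n \<Rightarrow> (real ^ ('n \<times> 'n)) set" where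
  "Tset i1 i2 = {char_vec W | W. weak_order W \<and> FF i1 i2 (char_vec W) = cc CARD('n)}"

lemma inT:
  fixes i1 i2 :: "'n::finite"
  shows "FF i1 i2 (char_vec (rel r)) = cc CARD('n) \<Longrightarrow> char_vec (rel r) \<in> Tset i1 i2"
  unfolding Tset_def mem_Collect_eq by (intro exI[of _ "rel r"] conjI refl wo_rel)

definition rk4 :: "('n \<Rightarrow> nat) \<Rightarrow> 'n \<Rightarrow> int \<Rightarrow> 'n \<Rightarrow> int \<Rightarrow> 'n \<Rightarrow> int \<Rightarrow> 'n \<Rightarrow> int \<Rightarrow> 'n \<Rightarrow> int" where
  "rk4 h a1 v1 a2 v2 a3 v3 a4 v4 x = (if x = a1 then v1 else if x = a2 then v2 else if x = a3 then v3 else if x = a4 then v4 else int (h x))"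

lemma rk4_rest: "x \<noteq> a1 \<Longrightarrow> x \<noteq> a2 \<Longrightarrow> x \<noteq> a3 \<Longrightarrow> x \<noteq> a4 \<Longrightarrow> rk4 h a1 v1 a2 v2 a3 v3 a4 v4 x = int (h x)"
  by (simp add: rk4_def)

lemma gr_rest: "r i1 < 0 \<Longrightarrow> r i2 < 0 \<Longrightarrow> r x \<ge> 0 \<Longrightarrow> gr i1 i2 r x = 0"
  by (simp add: gr_def)

lemma inj_rk4:
  assumes "inj h" and "v1 < 0" "v2 < 0" "v3 < 0" "v4 < 0"
    and "\<And>x y. x \<in> A \<Longrightarrow> y \<in> A \<Longrightarrow> x \<in> {a1, a2, a3, a4} \<Longrightarrow> y \<in> {a1, a2, a3, a4} \<Longrightarrow>
      rk4 h a1 v1 a2 v2 a3 v3 a4 v4 x = rk4 h a1 v1 a2 v2 a3 v3 a4 v4 y \<Longrightarrow> x = y"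
  shows "inj_on (rk4 h a1 v1 a2 v2 a3 v3 a4 v4) A"
proof (rule inj_onI)
  fix x y assume xy: "x \<in> A" "y \<in> A" and e: "rk4 h a1 v1 a2 v2 a3 v3 a4 v4 x = rk4 h a1 v1 a2 v2 a3 v3 a4 v4 y"
  have neg: "z \<in> {a1, a2, a3, a4} \<Longrightarrow> rk4 h a1 v1 a2 v2 a3 v3 a4 v4 z < 0" for z
    using assms(2-5) by (auto simp: rk4_def)
  show "x = y"
  proof (cases "x \<in> {a1, a2, a3, a4}")
    case xT: True
    show ?thesis
    proof (cases "y \<in> {a1, a2, a3, a4}")
      case True
      show ?thesis using assms(6)[OF xy xT True e] .
    next
      case False
      then have "rk4 h a1 v1 a2 v2 a3 v3 a4 v4 y \<ge> 0" by (auto simp: rk4_def)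
      with neg[OF xT] e show ?thesis by simp
    qed
  next
    case False
    then have x0: "rk4 h a1 v1 a2 v2 a3 v3 a4 v4 x = int (h x)" by (auto simp: rk4_def)
    show ?thesis
    proof (cases "y \<in> {a1, a2, a3, a4}")
      case True
      with neg[OF True] e x0 show ?thesis by simp
    next
      case False
      then have "rk4 h a1 v1 a2 v2 a3 v3 a4 v4 y = int (h y)" by (auto simp: rk4_def)
      with x0 e have "h x = h y" by simp
      then show ?thesis using assms(1) by (simp add: inj_eq)
    qed
  qed
qed

context
  fixes i1 i2 :: "'n::finite" and h :: "'n \<Rightarrow> nat"
  assumes ne: "i1 \<noteq> i2" and hinj: "inj h"
begin

lemma rel1:
  assumes j: "j \<in> UNIV - {i1, i2}"
  shows "\<exists>p\<in>Tset i1 i2. \<exists>q\<in>Tset i1 i2. p - q = axis (j, i2) 1"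
proof -
  let ?r1 = "rk4 h i1 (-3) i2 (-2) j (-1) j (-1)"
  let ?r2 = "rk4 h i1 (-3) i2 (-2) j (-2) j (-2)"
  have jj: "j \<noteq> i1" "j \<noteq> i2" using j by auto
  have t1: "char_vec (rel ?r1) \<in> Tset i1 i2"
  proof (rule inT)
    have "FF i1 i2 (char_vec (rel ?r1)) = cc CARD('n) + gr i1 i2 ?r1 j - x21 i1 i2 ?r1"
    proof (rule FF_inj[OF ne _ j])
      show "inj_on ?r1 (UNIV - {i1, i2})" by (rule inj_rk4[OF hinj]) (auto simp: rk4_def)
      show "gr i1 i2 ?r1 k = 0" if "k \<in> UNIV - {i1, i2}" "k \<noteq> j" for k
        using that ne jj by (intro gr_rest) (auto simp: rk4_def)
    qed
    also have "\<dots> = cc CARD('n)" using ne jj by (simp add: gr_def x21_def rk4_def)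
    finally show "FF i1 i2 (char_vec (rel ?r1)) = cc CARD('n)" .
  qed
  have t2: "char_vec (rel ?r2) \<in> Tset i1 i2"
  proof (rule inT)
    have "FF i1 i2 (char_vec (rel ?r2)) = cc CARD('n) + gr i1 i2 ?r2 j - x21 i1 i2 ?r2"
    proof (rule FF_inj[OF ne _ j])
      show "inj_on ?r2 (UNIV - {i1, i2})" by (rule inj_rk4[OF hinj]) (auto simp: rk4_def)
      show "gr i1 i2 ?r2 k = 0" if "k \<in> UNIV - {i1, i2}" "k \<noteq> j" for k
        using that ne jj by (intro gr_rest) (auto simp: rk4_def)
    qed
    also have "\<dots> = cc CARD('n)" using ne jj by (simp add: gr_def x21_def rk4_def)
    finally show "FF i1 i2 (char_vec (rel ?r2)) = cc CARD('n)" .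
  qed
  have d: "char_vec (rel ?r2) - char_vec (rel ?r1) = axis (j, i2) 1"
    by (rule vec_pairI) (use ne jj in \<open>auto simp: char_rel rk4_def axis_def\<close>)
  show ?thesis using t1 t2 d by blast
qed

end

lemma pair_from_inj:
  assumes inj: "inj_on r' A" and j: "j \<in> A" and j': "j' \<in> A" and jj: "j \<noteq> j'"
    and same: "\<And>k. k \<in> A \<Longrightarrow> k \<noteq> j' \<Longrightarrow> r k = r' k" and eq: "r j' = r j"
    and k: "k \<in> A" and k': "k' \<in> A" and kk: "k \<noteq> k'" and e: "r k = r k'"
  shows "(k, k') = (j, j') \<or> (k, k') = (j', j)"
proof (cases "k = j'")
  case True
  then have "k' \<noteq> j'" using kk by simp
  then have "r' k' = r' j" using e eq same[OF k'] same[OF j jj] True by simp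
  then have "k' = j" using inj_onD[OF inj _ k' j] by simp
  then show ?thesis using True by simp
next
  case False
  show ?thesis
  proof (cases "k' = j'")
    case True
    then have "r' k = r' j" using e eq same[OF k False] same[OF j jj] by simp
    then have "k = j" using inj_onD[OF inj _ k j] by simp
    then show ?thesis using True by simp
  next
    case False2: False
    then have "r' k = r' k'" using e same[OF k False] same[OF k' False2] by simp
    then have "k = k'" using inj_onD[OF inj _ k k'] by simp
    then show ?thesis using kk by simp
  qed
qed

context
  fixes i1 i2 :: "'n::finite" and h :: "'n \<Rightarrow> nat"
  assumes ne: "i1 \<noteq> i2" and hinj: "inj h"
begin

lemma tightI:
  assumes "inj_on r (UNIV - {i1, i2})" "j \<in> UNIV - {i1, i2}"
    "\<And>k. k \<in> UNIV - {i1, i2} \<Longrightarrow> k \<noteq> j \<Longrightarrow> gr i1 i2 r k = 0" "gr i1 i2 r j = x21 i1 i2 r"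
  shows "char_vec (rel r) \<in> Tset i1 i2"
  using FF_inj[OF ne assms(1-3)] assms(4) by (intro inT) simp

lemma rel2:
  assumes j: "j \<in> UNIV - {i1, i2}"
  shows "\<exists>p\<in>Tset i1 i2. \<exists>q\<in>Tset i1 i2. p - q = axis (i1, i2) 1 + axis (j, i2) 1"
proof -
  let ?r1 = "rk4 h i2 (-2) i1 (-1) j (-1) j (-1)"
  let ?r2 = "rk4 h i2 (-1) i1 (-1) j (-1) j (-1)"
  have jj: "j \<noteq> i1" "j \<noteq> i2" using j by auto
  have t1: "char_vec (rel ?r1) \<in> Tset i1 i2"
    by (rule tightI[where j=j]) (use ne jj in \<open>auto intro!: inj_rk4 hinj simp: rk4_def gr_def x21_def\<close>)
  have t2: "char_vec (rel ?r2) \<in> Tset i1 i2"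
    by (rule tightI[where j=j]) (use ne jj in \<open>auto intro!: inj_rk4 hinj simp: rk4_def gr_def x21_def\<close>)
  have d: "char_vec (rel ?r2) - char_vec (rel ?r1) = axis (i1, i2) 1 + axis (j, i2) 1"
    by (rule vec_pairI) (use ne jj in \<open>auto simp: char_rel rk4_def axis_def\<close>)
  show ?thesis using t1 t2 d by blast
qed

end

context
  fixes i1 i2 :: "'n::finite" and h :: "'n \<Rightarrow> nat"
  assumes ne: "i1 \<noteq> i2" and hinj: "inj h"
begin

lemma relw:
  assumes j: "j \<in> UNIV - {i1, i2}"
  shows "\<exists>p\<in>Tset i1 i2. \<exists>W. weak_order W \<and> FF i1 i2 (char_vec W) < cc CARD('n) \<and> p - char_vec W = axis (i1, j) 1"
proof -
  let ?r1 = "rk4 h i2 (-3) i1 (-1) j (-1) j (-1)"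
  let ?r2 = "rk4 h i2 (-3) j (-2) i1 (-1) i1 (-1)"
  have jj: "j \<noteq> i1" "j \<noteq> i2" using j by auto
  have t1: "char_vec (rel ?r1) \<in> Tset i1 i2"
    by (rule tightI[OF ne hinj, where j=j]) (use ne jj in \<open>auto intro!: inj_rk4 hinj simp: rk4_def gr_def x21_def\<close>)
  have "FF i1 i2 (char_vec (rel ?r2)) = cc CARD('n) + gr i1 i2 ?r2 j - x21 i1 i2 ?r2"
    by (rule FF_inj[OF ne _ j]) (use ne jj in \<open>auto intro!: inj_rk4 hinj simp: rk4_def gr_def x21_def\<close>)
  also have "\<dots> = cc CARD('n) - 1" using ne jj by (simp add: rk4_def gr_def x21_def)
  finally have t2: "FF i1 i2 (char_vec (rel ?r2)) < cc CARD('n)" by simp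
  have d: "char_vec (rel ?r1) - char_vec (rel ?r2) = axis (i1, j) 1"
    by (rule vec_pairI) (use ne jj in \<open>auto simp: char_rel rk4_def axis_def\<close>)
  show ?thesis using t1 t2 d wo_rel by blast
qed

lemma tightD:
  fixes j j' :: 'n
  assumes j: "j \<in> UNIV - {i1, i2}" and j': "j' \<in> UNIV - {i1, i2}" and jj': "j \<noteq> j'"
  shows "char_vec (rel (rk4 h i2 (-3) i1 (-2) j' (-2) j (-2))) \<in> Tset i1 i2"
proof -
  let ?r = "rk4 h i2 (-3) i1 (-2) j' (-2) j (-2)"
  let ?r' = "rk4 h i2 (-3) i1 (-2) j' (-1) j (-2)"
  have jj: "j \<noteq> i1" "j \<noteq> i2" "j' \<noteq> i1" "j' \<noteq> i2" using j j' by auto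
  have inj': "inj_on ?r' (UNIV - {i1, i2})"
    by (rule inj_rk4[OF hinj]) (use ne jj jj' in \<open>auto simp: rk4_def\<close>)
  have "FF i1 i2 (char_vec (rel ?r)) = cc CARD('n) + gr i1 i2 ?r j + gr i1 i2 ?r j' - x21 i1 i2 ?r - 1"
  proof (rule FF_pair[OF ne j j' jj'])
    show "?r j = ?r j'" using ne jj jj' by (simp add: rk4_def)
    show "(k, k') = (j, j') \<or> (k, k') = (j', j)"
      if "k \<in> UNIV - {i1, i2}" "k' \<in> UNIV - {i1, i2}" "k \<noteq> k'" "?r k = ?r k'" for k k'
      by (rule pair_from_inj[OF inj' j j' jj' _ _ that]) (use ne jj jj' in \<open>auto simp: rk4_def\<close>)
    show "gr i1 i2 ?r k = 0" if "k \<in> UNIV - {i1, i2}" "k \<noteq> j" "k \<noteq> j'" for k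
      using that ne jj by (auto simp: rk4_def gr_def)
  qed
  also have "\<dots> = cc CARD('n)" using ne jj jj' by (simp add: rk4_def gr_def x21_def)
  finally show ?thesis by (rule inT)
qed

lemma relA:
  assumes j: "j \<in> UNIV - {i1, i2}" and j': "j' \<in> UNIV - {i1, i2}" and jj': "j \<noteq> j'"
  shows "\<exists>p\<in>Tset i1 i2. \<exists>q\<in>Tset i1 i2. p - q = axis (i1, j) 1 + axis (j', j) 1"
proof -
  let ?r1 = "rk4 h i2 (-3) i1 (-2) j' (-2) j (-2)"
  let ?r2 = "rk4 h i2 (-3) j (-2) i1 (-1) j' (-1)"
  have jj: "j \<noteq> i1" "j \<noteq> i2" "j' \<noteq> i1" "j' \<noteq> i2" using j j' by auto
  have t1: "char_vec (rel ?r1) \<in> Tset i1 i2" by (rule tightD[OF j j' jj'])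
  have t2: "char_vec (rel ?r2) \<in> Tset i1 i2"
    by (rule tightI[OF ne hinj, where j=j']) (use ne jj jj' in \<open>auto intro!: inj_rk4 hinj simp: rk4_def gr_def x21_def\<close>)
  have d: "char_vec (rel ?r1) - char_vec (rel ?r2) = axis (i1, j) 1 + axis (j', j) 1"
    by (rule vec_pairI) (use ne jj jj' in \<open>auto simp: char_rel rk4_def axis_def\<close>)
  show ?thesis using t1 t2 d by blast
qed

lemma relB:
  assumes j: "j \<in> UNIV - {i1, i2}" and j': "j' \<in> UNIV - {i1, i2}" and jj': "j \<noteq> j'"
  shows "\<exists>p\<in>Tset i1 i2. \<exists>q\<in>Tset i1 i2. p - q = axis (j, i1) 1 + axis (j, j') 1"
proof -
  let ?r1 = "rk4 h i2 (-3) i1 (-2) j' (-2) j (-2)"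
  let ?r2 = "rk4 h i2 (-3) i1 (-2) j' (-2) j (-1)"
  have jj: "j \<noteq> i1" "j \<noteq> i2" "j' \<noteq> i1" "j' \<noteq> i2" using j j' by auto
  have t1: "char_vec (rel ?r1) \<in> Tset i1 i2" by (rule tightD[OF j j' jj'])
  have t2: "char_vec (rel ?r2) \<in> Tset i1 i2"
    by (rule tightI[OF ne hinj, where j=j']) (use ne jj jj' in \<open>auto intro!: inj_rk4 hinj simp: rk4_def gr_def x21_def\<close>)
  have d: "char_vec (rel ?r1) - char_vec (rel ?r2) = axis (j, i1) 1 + axis (j, j') 1"
    by (rule vec_pairI) (use ne jj jj' in \<open>auto simp: char_rel rk4_def axis_def\<close>)
  show ?thesis using t1 t2 d by blast
qed

lemma relS:
  assumes j: "j \<in> UNIV - {i1, i2}" and k: "k \<in> UNIV - {i1, i2}" and jk: "j \<noteq> k"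
  shows "\<exists>p\<in>Tset i1 i2. \<exists>q\<in>Tset i1 i2. p - q = axis (j, k) 1 - axis (k, j) 1"
proof -
  let ?r1 = "rk4 h i1 (-4) i2 (-3) j (-2) k (-1)"
  let ?r2 = "rk4 h i1 (-4) i2 (-3) j (-1) k (-2)"
  have jj: "j \<noteq> i1" "j \<noteq> i2" "k \<noteq> i1" "k \<noteq> i2" using j k by auto
  have t1: "char_vec (rel ?r1) \<in> Tset i1 i2"
    by (rule tightI[OF ne hinj, where j=j]) (use ne jj jk in \<open>auto intro!: inj_rk4 hinj simp: rk4_def gr_def x21_def\<close>)
  have t2: "char_vec (rel ?r2) \<in> Tset i1 i2"
    by (rule tightI[OF ne hinj, where j=j]) (use ne jj jk in \<open>auto intro!: inj_rk4 hinj simp: rk4_def gr_def x21_def\<close>)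
  have d: "char_vec (rel ?r1) - char_vec (rel ?r2) = axis (j, k) 1 - axis (k, j) 1"
    by (rule vec_pairI) (use ne jj jk in \<open>auto simp: char_rel rk4_def axis_def\<close>)
  show ?thesis using t1 t2 d by blast
qed

lemma relG:
  assumes j: "j \<in> UNIV - {i1, i2}"
  shows "\<exists>p\<in>Tset i1 i2. \<exists>q\<in>Tset i1 i2. p - q = axis (j, i1) 1 - axis (i2, j) 1"
proof -
  let ?r1 = "rk4 h i1 (-2) j (-2) i2 (-1) i2 (-1)"
  let ?r2 = "rk4 h i1 (-2) j (-1) i2 (-1) i2 (-1)"
  have jj: "j \<noteq> i1" "j \<noteq> i2" using j by auto
  have t1: "char_vec (rel ?r1) \<in> Tset i1 i2"
    by (rule tightI[OF ne hinj, where j=j]) (use ne jj in \<open>auto intro!: inj_rk4 hinj simp: rk4_def gr_def x21_def\<close>)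
  have t2: "char_vec (rel ?r2) \<in> Tset i1 i2"
    by (rule tightI[OF ne hinj, where j=j]) (use ne jj in \<open>auto intro!: inj_rk4 hinj simp: rk4_def gr_def x21_def\<close>)
  have d: "char_vec (rel ?r1) - char_vec (rel ?r2) = axis (j, i1) 1 - axis (i2, j) 1"
    by (rule vec_pairI) (use ne jj in \<open>auto simp: char_rel rk4_def axis_def\<close>)
  show ?thesis using t1 t2 d by blast
qed

lemma relD:
  assumes j: "j \<in> UNIV - {i1, i2}"
  shows "\<exists>p\<in>Tset i1 i2. \<exists>q\<in>Tset i1 i2. p - q = axis (i2, i1) 1 + axis (i2, j) 1"
proof -
  let ?r1 = "rk4 h i1 (-1) j (-1) i2 (-1) i2 (-1)"
  let ?r2 = "rk4 h i1 (-2) j (-2) i2 (-1) i2 (-1)"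
  have jj: "j \<noteq> i1" "j \<noteq> i2" using j by auto
  have t1: "char_vec (rel ?r1) \<in> Tset i1 i2"
    by (rule tightI[OF ne hinj, where j=j]) (use ne jj in \<open>auto intro!: inj_rk4 hinj simp: rk4_def gr_def x21_def\<close>)
  have t2: "char_vec (rel ?r2) \<in> Tset i1 i2"
    by (rule tightI[OF ne hinj, where j=j]) (use ne jj in \<open>auto intro!: inj_rk4 hinj simp: rk4_def gr_def x21_def\<close>)
  have d: "char_vec (rel ?r1) - char_vec (rel ?r2) = axis (i2, i1) 1 + axis (i2, j) 1"
    by (rule vec_pairI) (use ne jj in \<open>auto simp: char_rel rk4_def axis_def\<close>)
  show ?thesis using t1 t2 d by blast
qed

end

lemma FF_lin:
  fixes a b :: real and x y :: "real ^ ('n::finite \<times> 'n)"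
  shows "FF i1 i2 (a *\<^sub>R x + b *\<^sub>R y) = a * FF i1 i2 x + b * FF i1 i2 y"
  by (simp add: FF_def sum.distrib sum_distrib_left algebra_simps sum_subtractf)

lemma main_FF:
  fixes i1 i2 :: "'n::finite"
  assumes card4: "CARD('n) \<ge> 4" and ne: "i1 \<noteq> i2"
  shows "defines_facet (FF i1 i2) (cc CARD('n)) (weak_order_polytope :: (real ^ ('n \<times> 'n)) set)"
proof -
  let ?R = "UNIV - {i1, i2} :: 'n set"
  let ?V = "{char_vec W | W. weak_order (W :: ('n \<times> 'n) set)}"
  let ?P = "weak_order_polytope :: (real ^ ('n \<times> 'n)) set"
  let ?T = "Tset i1 i2"
  have Pdef: "?P = convex hull ?V" by (simp add: weak_order_polytope_def)
  obtain h :: "'n \<Rightarrow> nat" where hinj: "inj h"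
    using finite_imp_inj_to_nat_seg[of "UNIV :: 'n set"] by auto
  have cR: "real (card ?R) = real CARD('n) - 2" by (rule card_RR[OF ne])
  then have "card ?R \<ge> 2" using card4 by simp
  then obtain j0 where j0: "j0 \<in> ?R" by (metis all_not_in_conv card.empty not_numeral_le_zero)
  have "card (?R - {j0}) \<ge> 1" using \<open>card ?R \<ge> 2\<close> j0 by simp
  then obtain j1 where j1: "j1 \<in> ?R" "j1 \<noteq> j0" by (metis Diff_iff all_not_in_conv card.empty insertCI not_one_le_zero)
  have TV: "?T \<subseteq> ?V" by (auto simp: Tset_def)
  have VP: "?V \<subseteq> ?P" unfolding Pdef by (rule hull_subset)
  have valid: "\<forall>x\<in>?P. FF i1 i2 x \<le> cc CARD('n)"
  proof -
    have cvx: "convex {x. FF i1 i2 x \<le> cc CARD('n)}"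
      unfolding convex_def
    proof (intro allI impI ballI, clarify)
      fix x y :: "real ^ ('n \<times> 'n)" and u v :: real
      assume xy: "FF i1 i2 x \<le> cc CARD('n)" "FF i1 i2 y \<le> cc CARD('n)" and uv: "0 \<le> u" "0 \<le> v" "u + v = 1"
      have "u * FF i1 i2 x + v * FF i1 i2 y \<le> u * cc CARD('n) + v * cc CARD('n)"
        using xy uv by (intro add_mono mult_left_mono) auto
      moreover have "u * cc CARD('n) + v * cc CARD('n) = cc CARD('n)"
        using uv by (metis distrib_right mult_1)
      ultimately show "FF i1 i2 (u *\<^sub>R x + v *\<^sub>R y) \<le> cc CARD('n)" by (simp add: FF_lin)
    qed
    have "?V \<subseteq> {x. FF i1 i2 x \<le> cc CARD('n)}" using valid_wo[OF ne] by auto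
    then have "convex hull ?V \<subseteq> {x. FF i1 i2 x \<le> cc CARD('n)}" by (rule hull_minimal) (rule cvx)
    then show ?thesis unfolding Pdef by auto
  qed
  obtain t0 W0 where t0: "t0 \<in> ?T" and W0: "weak_order W0" "FF i1 i2 (char_vec W0) < cc CARD('n)"
    and t0d: "t0 - char_vec W0 = axis (i1, j0) 1"
    using relw[OF ne hinj j0] by blast
  let ?q = "char_vec W0"
  let ?A = "affine hull (insert ?q ?T)"
  let ?M = "(\<lambda>x. x - t0) ` ?A"
  have t0A: "t0 \<in> ?A" using t0 by (simp add: hull_inc)
  have subM: "subspace ?M" by (rule affine_diffs_subspace_subtract) (simp_all add: t0A)
  have dM: "a - b \<in> ?M" if "a \<in> insert ?q ?T" "b \<in> insert ?q ?T" for a b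
  proof -
    have "a - t0 \<in> ?M" "b - t0 \<in> ?M" using that by (auto intro: hull_inc)
    then have "(a - t0) - (b - t0) \<in> ?M" by (rule subspace_diff[OF subM])
    then show ?thesis by simp
  qed
  have dT: "v \<in> ?M" if "\<exists>p\<in>?T. \<exists>q\<in>?T. p - q = v" for v
    using that dM by blast
  note sadd = subspace_add[OF subM] and sdiff = subspace_diff[OF subM]
  have e_ji2: "axis (j, i2) 1 \<in> ?M" if "j \<in> ?R" for j using dT[OF rel1[OF ne hinj that]] .
  have e_i1i2: "axis (i1, i2) 1 \<in> ?M"
  proof -
    have "axis (i1, i2) 1 + axis (j0, i2) 1 \<in> ?M" using dT[OF rel2[OF ne hinj j0]] .
    from sdiff[OF this e_ji2[OF j0]] show ?thesis by simp
  qed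
  have e_i1j0: "axis (i1, j0) 1 \<in> ?M" using dM[of t0 ?q] t0 t0d by simp
  have e_jj0: "axis (j, j0) 1 \<in> ?M" if "j \<in> ?R" "j \<noteq> j0" for j
  proof -
    have "axis (i1, j0) 1 + axis (j, j0) 1 \<in> ?M" using dT[OF relA[OF ne hinj j0 that(1) that(2)[symmetric]]] .
    from sdiff[OF this e_i1j0] show ?thesis by simp
  qed
  have e_j0j: "axis (j0, j) 1 \<in> ?M" if "j \<in> ?R" "j \<noteq> j0" for j
  proof -
    have "axis (j0, j) 1 - axis (j, j0) 1 \<in> ?M" using dT[OF relS[OF ne hinj j0 that(1) that(2)[symmetric]]] .
    from sadd[OF this e_jj0[OF that]] show ?thesis by simp
  qed
  have e_i1j: "axis (i1, j) 1 \<in> ?M" if "j \<in> ?R" for j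
  proof (cases "j = j0")
    case True then show ?thesis using e_i1j0 by simp
  next
    case False
    have "axis (i1, j) 1 + axis (j0, j) 1 \<in> ?M" using dT[OF relA[OF ne hinj that j0 False]] .
    from sdiff[OF this e_j0j[OF that False]] show ?thesis by simp
  qed
  have e_jj: "axis (j', j) 1 \<in> ?M" if "j \<in> ?R" "j' \<in> ?R" "j \<noteq> j'" for j j'
  proof -
    have "axis (i1, j) 1 + axis (j', j) 1 \<in> ?M" using dT[OF relA[OF ne hinj that]] .
    from sdiff[OF this e_i1j[OF that(1)]] show ?thesis by simp
  qed
  have e_ji1: "axis (j, i1) 1 \<in> ?M" if "j \<in> ?R" for j
  proof -
    obtain j' where j': "j' \<in> ?R" "j \<noteq> j'"
      using j0 j1 by (cases "j = j0") auto
    have "axis (j, i1) 1 + axis (j, j') 1 \<in> ?M" using dT[OF relB[OF ne hinj that j'(1) j'(2)]] .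
    from sdiff[OF this e_jj[OF j'(1) that j'(2)[symmetric]]] show ?thesis by simp
  qed
  have e_i2j: "axis (i2, j) 1 \<in> ?M" if "j \<in> ?R" for j
  proof -
    have "axis (j, i1) 1 - axis (i2, j) 1 \<in> ?M" using dT[OF relG[OF ne hinj that]] .
    from sdiff[OF e_ji1[OF that] this] show ?thesis by simp
  qed
  have e_i2i1: "axis (i2, i1) 1 \<in> ?M"
  proof -
    have "axis (i2, i1) 1 + axis (i2, j0) 1 \<in> ?M" using dT[OF relD[OF ne hinj j0]] .
    from sdiff[OF this e_i2j[OF j0]] show ?thesis by simp
  qed
  have e_all: "axis (a, b) 1 \<in> ?M" if ab: "a \<noteq> b" for a b
  proof -
    consider "a = i1" "b = i2" | "a = i2" "b = i1" | "a = i1" "b \<in> ?R" | "a = i2" "b \<in> ?R"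
      | "a \<in> ?R" "b = i1" | "a \<in> ?R" "b = i2" | "a \<in> ?R" "b \<in> ?R"
      using ab ne by (cases "a = i1"; cases "a = i2"; cases "b = i1"; cases "b = i2") auto
    then show ?thesis
    proof cases
      case 7 then show ?thesis using e_jj[of b a] ab by simp
    qed (use e_i1i2 e_i2i1 e_i1j e_i2j e_ji1 e_ji2 in simp_all)
  qed
  have VA: "?V \<subseteq> ?A"
  proof
    fix v assume "v \<in> ?V"
    then obtain W where v: "v = char_vec W" by blast
    obtain Wt where Wt: "t0 = char_vec Wt" using t0 by (auto simp: Tset_def)
    have "(\<Sum>a\<in>UNIV. (v - t0) $ a *\<^sub>R axis a (1::real)) \<in> ?M"
    proof (rule subspace_sum[OF subM])
      fix a :: "'n \<times> 'n"
      obtain a1 a2 where a: "a = (a1, a2)" by (cases a)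
      show "(v - t0) $ a *\<^sub>R axis a 1 \<in> ?M"
      proof (cases "a1 = a2")
        case True
        then have "(v - t0) $ a = 0" using a v Wt by (simp add: char_vec_nth)
        then show ?thesis using subspace_0[OF subM] by simp
      next
        case False
        then show ?thesis using e_all[OF False] a by (simp add: subspace_scale[OF subM])
      qed
    qed
    also have "(\<Sum>a\<in>UNIV. (v - t0) $ a *\<^sub>R axis a (1::real)) = v - t0"
      using basis_expansion[of "v - t0"] by (simp add: scalar_mult_eq_scaleR)
    finally have "v - t0 \<in> ?M" .
    then obtain y where "y \<in> ?A" "v - t0 = y - t0" by blast
    then show "v \<in> ?A" by simp
  qed
  have adV: "aff_dim ?P = aff_dim ?V" unfolding Pdef by (rule aff_dim_convex_hull)
  have "aff_dim ?V \<le> aff_dim ?A" by (rule aff_dim_subset[OF VA])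
  also have "\<dots> = aff_dim (insert ?q ?T)" by simp
  also have "\<dots> \<le> aff_dim ?T + 1" by (simp add: aff_dim_insert)
  finally have dimle: "aff_dim ?P \<le> aff_dim ?T + 1" using adV by simp
  obtain B where B: "B \<subseteq> ?T" "\<not> affine_dependent B" "affine hull ?T = affine hull B"
    using affine_basis_exists[of ?T] by blast
  have cB: "int (card B) = aff_dim ?T + 1"
    using aff_dim_affine_independent[OF B(2)] aff_dim_affine_hull2[OF B(3)] by simp
  have Pne: "?P \<noteq> {}" using t0 TV VP by auto
  have "aff_dim ?P \<noteq> -1" using Pne aff_dim_empty by blast
  moreover have "aff_dim ?P \<ge> -1" by (rule aff_dim_geq)
  ultimately have "aff_dim ?P \<ge> 0" by linarith
  define d where "d = nat (aff_dim ?P)"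
  have d: "aff_dim ?P = int d" unfolding d_def using \<open>aff_dim ?P \<ge> 0\<close> by simp
  have "d \<le> card B" using d dimle cB by simp
  then obtain S where S: "S \<subseteq> B" "card S = d" "finite S" by (rule obtain_subset_with_card_n)
  have F_ne: "?P \<inter> {x. FF i1 i2 x = cc CARD('n)} \<noteq> {}"
    using t0 TV VP by (auto simp: Tset_def)
  have qP: "?q \<in> ?P" using VP W0(1) by blast
  have F_proper: "?P \<inter> {x. FF i1 i2 x = cc CARD('n)} \<noteq> ?P"
  proof
    assume "?P \<inter> {x. FF i1 i2 x = cc CARD('n)} = ?P"
    then have "?q \<in> {x. FF i1 i2 x = cc CARD('n)}" using qP by blast
    then show False using W0(2) by simp
  qed
  have TF: "?T \<subseteq> ?P \<inter> {x. FF i1 i2 x = cc CARD('n)}" using TV VP by (auto simp: Tset_def)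
  show ?thesis
    unfolding defines_facet_def Let_def
  proof (intro conjI valid F_ne F_proper exI[of _ S])
    show "S \<subseteq> ?P \<inter> {x. FF i1 i2 x = cc CARD('n)}" using S(1) B(1) TF by blast
    show "finite S" by (rule S(3))
    show "int (card S) = aff_dim ?P" using S(2) d by simp
    show "\<not> affine_dependent S" by (rule affine_independent_subset[OF B(2) S(1)])
  qed
qed

theorem mainTheorem10:
  fixes i1 i2 :: "'n::finite"
  assumes "CARD('n) \<ge> 4" and "i1 \<noteq> i2"
  shows "defines_facet
    (\<lambda>x :: real ^ ('n \<times> 'n).
        (\<Sum>j\<in>UNIV - {i1, i2}. x $ (i1, j) + x $ (j, i1) + x $ (i2, j))
        - x $ (i2, i1)
        - (\<Sum>p\<in>{(j, j'). j \<in> UNIV - {i1, i2} \<and> j' \<in> UNIV - {i1, i2} \<and> j \<noteq> j'}. x $ p))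
    (3 - (real CARD('n) - 4) * (real CARD('n) - 5) / 2)
    (weak_order_polytope :: (real ^ ('n \<times> 'n)) set)"
  using main_FF[OF assms] unfolding FF_def[abs_def] cc_def .

end
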